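(* Let $\mathcal A$ be a $C^*$-algebra with identity $1$, $\delta\colon\mathcal A\to\mathcal A$ a $^*$-endomorphism, and $\delta_*$ a complete transfer operator for $(\mathcal A,\delta)$. Suppose $\delta(1)$ lies in the center of $\mathcal A$. Then 1) both triples $(\delta,\ \delta_*(1)\mathcal A,\ \delta(1)\mathcal A)$ and $(\delta_*,\ \delta(1)\mathcal A,\ \delta_*(1)\mathcal A)$ are partial automorphisms of $\mathcal A$ (with $\delta,\delta_*$ restricted to the respective first ideals), and they are inverse to each other; 2) $\delta_*\colon\mathcal A\to\mathcal A$ is an endomorphism.
   Context: A transfer operator for $(\mathcal A,\delta)$ is a continuous positive linear map $\delta_*\colon\mathcal A\to\mathcal A$ such that $\delta_*(\delta(a)b)=a\,\delta_*(b)$ for all $a,b\in\mathcal A$; it is complete if $\delta(\delta_*(a))=\delta(1)a\delta(1)$ for all $a\in\mathcal A$. A partial automorphism of $\mathcal A$ is a triple $(\theta,I,J)$ where $I,J$ are closed two-sided ideals of $\mathcal A$ and $\theta\colon I\to J$ is a $^*$-isomorphism. *)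

theory Defs
  imports "HOL-Analysis.Analysis"
begin

text \<open>A unital C*-algebra is modelled as a real Banach algebra with unit (norm 1 = 1)
  carrying a compatible complex scalar multiplication smul and an involution adj
  satisfying the C*-identity.\<close>

locale unital_cstar_algebra =
  fixes smul :: "complex \<Rightarrow> 'a::{real_normed_algebra_1,banach} \<Rightarrow> 'a"
    and adj :: "'a \<Rightarrow> 'a"
  assumes smul_add_right: "smul c (a + b) = smul c a + smul c b"
    and smul_add_left: "smul (c + d) a = smul c a + smul d a"
    and smul_smul: "smul c (smul d a) = smul (c * d) a"
    and smul_of_real: "smul (complex_of_real r) a = r *\<^sub>R a"
    and smul_mult_left: "smul c (a * b) = smul c a * b"
    and smul_mult_right: "smul c (a * b) = a * smul c b"
    and norm_smul: "norm (smul c a) = cmod c * norm a"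
    and adj_adj: "adj (adj a) = a"
    and adj_add: "adj (a + b) = adj a + adj b"
    and adj_smul: "adj (smul c a) = smul (cnj c) (adj a)"
    and adj_mult: "adj (a * b) = adj b * adj a"
    and cstar_identity: "norm (adj a * a) = (norm a)^2"

definition clinear_map :: "(complex \<Rightarrow> 'a \<Rightarrow> 'a) \<Rightarrow> ('a::{real_normed_algebra_1} \<Rightarrow> 'a) \<Rightarrow> bool" where
  "clinear_map smul f \<longleftrightarrow> (\<forall>a b. f (a + b) = f a + f b) \<and> (\<forall>c a. f (smul c a) = smul c (f a))"

definition star_endo :: "(complex \<Rightarrow> 'a \<Rightarrow> 'a) \<Rightarrow> ('a \<Rightarrow> 'a) \<Rightarrow> ('a::{real_normed_algebra_1} \<Rightarrow> 'a) \<Rightarrow> bool" where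
  "star_endo smul adj f \<longleftrightarrow> clinear_map smul f \<and> (\<forall>a b. f (a * b) = f a * f b) \<and> (\<forall>a. f (adj a) = adj (f a))"

definition invertible_elem :: "'a::real_normed_algebra_1 \<Rightarrow> bool" where
  "invertible_elem a \<longleftrightarrow> (\<exists>b. a * b = 1 \<and> b * a = 1)"

definition cspectrum :: "(complex \<Rightarrow> 'a \<Rightarrow> 'a) \<Rightarrow> 'a::real_normed_algebra_1 \<Rightarrow> complex set" where
  "cspectrum smul a = {z. \<not> invertible_elem (a - smul z 1)}"

definition positive_elem :: "(complex \<Rightarrow> 'a \<Rightarrow> 'a) \<Rightarrow> ('a \<Rightarrow> 'a) \<Rightarrow> 'a::real_normed_algebra_1 \<Rightarrow> bool" where
  "positive_elem smul adj a \<longleftrightarrow> adj a = a \<and> cspectrum smul a \<subseteq> {z. Im z = 0 \<and> Re z \<ge> 0}"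

definition positive_map :: "(complex \<Rightarrow> 'a \<Rightarrow> 'a) \<Rightarrow> ('a \<Rightarrow> 'a) \<Rightarrow> ('a::real_normed_algebra_1 \<Rightarrow> 'a) \<Rightarrow> bool" where
  "positive_map smul adj f \<longleftrightarrow> clinear_map smul f \<and>
     (\<forall>a. positive_elem smul adj a \<longrightarrow> positive_elem smul adj (f a))"

definition transfer_operator :: "(complex \<Rightarrow> 'a \<Rightarrow> 'a) \<Rightarrow> ('a \<Rightarrow> 'a) \<Rightarrow> ('a \<Rightarrow> 'a) \<Rightarrow> ('a::real_normed_algebra_1 \<Rightarrow> 'a) \<Rightarrow> bool" where
  "transfer_operator smul adj \<delta> T \<longleftrightarrow> continuous_on UNIV T \<and> positive_map smul adj T \<and>
     (\<forall>a b. T (\<delta> a * b) = a * T b)"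

definition complete_transfer_operator :: "(complex \<Rightarrow> 'a \<Rightarrow> 'a) \<Rightarrow> ('a \<Rightarrow> 'a) \<Rightarrow> ('a \<Rightarrow> 'a) \<Rightarrow> ('a::real_normed_algebra_1 \<Rightarrow> 'a) \<Rightarrow> bool" where
  "complete_transfer_operator smul adj \<delta> T \<longleftrightarrow> transfer_operator smul adj \<delta> T \<and>
     (\<forall>a. \<delta> (T a) = \<delta> 1 * a * \<delta> 1)"

definition closed_ideal :: "(complex \<Rightarrow> 'a \<Rightarrow> 'a) \<Rightarrow> 'a::real_normed_algebra_1 set \<Rightarrow> bool" where
  "closed_ideal smul I \<longleftrightarrow> closed I \<and> 0 \<in> I \<and> (\<forall>a\<in>I. \<forall>b\<in>I. a + b \<in> I) \<and>
     (\<forall>c. \<forall>a\<in>I. smul c a \<in> I) \<and> (\<forall>a\<in>I. \<forall>x. x * a \<in> I \<and> a * x \<in> I)"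

definition star_iso_on :: "(complex \<Rightarrow> 'a \<Rightarrow> 'a) \<Rightarrow> ('a \<Rightarrow> 'a) \<Rightarrow> ('a::real_normed_algebra_1 \<Rightarrow> 'a) \<Rightarrow> 'a set \<Rightarrow> 'a set \<Rightarrow> bool" where
  "star_iso_on smul adj \<theta> I J \<longleftrightarrow> bij_betw \<theta> I J \<and>
     (\<forall>a\<in>I. \<forall>b\<in>I. \<theta> (a + b) = \<theta> a + \<theta> b \<and> \<theta> (a * b) = \<theta> a * \<theta> b) \<and>
     (\<forall>c. \<forall>a\<in>I. \<theta> (smul c a) = smul c (\<theta> a)) \<and>
     (\<forall>a\<in>I. \<theta> (adj a) = adj (\<theta> a))"

definition partial_automorphism :: "(complex \<Rightarrow> 'a \<Rightarrow> 'a) \<Rightarrow> ('a \<Rightarrow> 'a) \<Rightarrow> ('a::real_normed_algebra_1 \<Rightarrow> 'a) \<Rightarrow> 'a set \<Rightarrow> 'a set \<Rightarrow> bool" where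
  "partial_automorphism smul adj \<theta> I J \<longleftrightarrow> closed_ideal smul I \<and> closed_ideal smul J \<and> star_iso_on smul adj \<theta> I J"

end

theory Submission
  imports Defs
begin

lemma one_positive:
  assumes A: "unital_cstar_algebra smul adj"
  shows "positive_elem smul adj (1::'a::{real_normed_algebra_1,banach})"
proof -
  interpret unital_cstar_algebra smul adj by (rule A)
  have s1: "smul 1 a = a" for a
    using smul_of_real[of 1 a] by simp
  have adj1: "adj 1 = 1"
  proof -
    have "adj (adj 1 * 1) = adj 1 * adj (adj 1)" by (rule adj_mult)
    then show ?thesis by (simp add: adj_adj)
  qed
  have inv: "invertible_elem (1 - smul z 1)" if "z \<noteq> 1" for z
  proof -
    define w where "w = 1 - z"
    have w0: "w \<noteq> 0" using that by (simp add: w_def)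
    have "smul (w + z) 1 = smul w 1 + smul z 1" by (rule smul_add_left)
    hence e: "1 - smul z 1 = smul w 1" by (simp add: w_def s1 algebra_simps)
    have "smul (1/w) 1 * smul w 1 = smul (1/w) (1 * smul w 1)" by (rule smul_mult_left[symmetric])
    also have "\<dots> = 1" using w0 by (simp add: smul_smul s1)
    finally have h1: "smul (1/w) 1 * smul w 1 = 1" .
    have "smul w 1 * smul (1/w) 1 = smul w (1 * smul (1/w) 1)" by (rule smul_mult_left[symmetric])
    also have "\<dots> = 1" using w0 by (simp add: smul_smul s1)
    finally have h2: "smul w 1 * smul (1/w) 1 = 1" .
    show ?thesis unfolding invertible_elem_def e using h1 h2 by blast
  qed
  have "cspectrum smul 1 \<subseteq> {z. Im z = 0 \<and> Re z \<ge> 0}"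
  proof
    fix z assume "z \<in> cspectrum smul 1"
    hence "\<not> invertible_elem (1 - smul z 1)" by (simp add: cspectrum_def)
    hence "z = 1" using inv by blast
    thus "z \<in> {z. Im z = 0 \<and> Re z \<ge> 0}" by simp
  qed
  thus ?thesis unfolding positive_elem_def using adj1 by simp
qed

theorem proposition6:
  fixes smul :: "complex \<Rightarrow> 'a::{real_normed_algebra_1,banach} \<Rightarrow> 'a"
    and adj :: "'a \<Rightarrow> 'a" and \<delta> T :: "'a \<Rightarrow> 'a"
  assumes "unital_cstar_algebra smul adj"
    and "star_endo smul adj \<delta>"
    and "complete_transfer_operator smul adj \<delta> T"
    and "\<forall>x. \<delta> 1 * x = x * \<delta> 1"
  shows "partial_automorphism smul adj \<delta> (range (\<lambda>a. T 1 * a)) (range (\<lambda>a. \<delta> 1 * a))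
       \<and> partial_automorphism smul adj T (range (\<lambda>a. \<delta> 1 * a)) (range (\<lambda>a. T 1 * a))
       \<and> (\<forall>a \<in> range (\<lambda>a. T 1 * a). T (\<delta> a) = a)
       \<and> (\<forall>a \<in> range (\<lambda>a. \<delta> 1 * a). \<delta> (T a) = a)
       \<and> star_endo smul adj T"
proof -
  interpret unital_cstar_algebra smul adj by (rule assms(1))
  define p where "p = \<delta> 1"
  define q where "q = T 1"
  have dadd: "\<delta> (a + b) = \<delta> a + \<delta> b" for a b using assms(2) by (simp add: star_endo_def clinear_map_def)
  have dsmul: "\<delta> (smul c a) = smul c (\<delta> a)" for c a using assms(2) by (simp add: star_endo_def clinear_map_def)
  have dmul: "\<delta> (a * b) = \<delta> a * \<delta> b" for a b using assms(2) by (simp add: star_endo_def)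
  have dadj: "\<delta> (adj a) = adj (\<delta> a)" for a using assms(2) by (simp add: star_endo_def)
  have Tadd: "T (a + b) = T a + T b" for a b using assms(3)
    by (simp add: complete_transfer_operator_def transfer_operator_def positive_map_def clinear_map_def)
  have Tsmul: "T (smul c a) = smul c (T a)" for c a using assms(3)
    by (simp add: complete_transfer_operator_def transfer_operator_def positive_map_def clinear_map_def)
  have Ttr: "T (\<delta> a * b) = a * T b" for a b using assms(3)
    by (simp add: complete_transfer_operator_def transfer_operator_def)
  have Tpos: "positive_elem smul adj (T a)" if "positive_elem smul adj a" for a using assms(3) that
    by (simp add: complete_transfer_operator_def transfer_operator_def positive_map_def)
  have Tc: "\<delta> (T a) = p * a * p" for a using assms(3)
    by (simp add: complete_transfer_operator_def p_def)
  have pc: "p * x = x * p" for x using assms(4) by (simp add: p_def)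
  have adj1: "adj 1 = 1"
  proof -
    have "adj (adj 1 * 1) = adj 1 * adj (adj 1)" by (rule adj_mult)
    then show ?thesis by (simp add: adj_adj)
  qed
  have pp: "p * p = p" using dmul[of 1 1] by (simp add: p_def)
  have padj: "adj p = p" using dadj[of 1] by (simp add: p_def adj1)
  have Tp: "T (p * b) = T b" for b using Ttr[of 1 b] by (simp add: p_def)
  have Td: "T (\<delta> a) = a * q" for a using Ttr[of a 1] by (simp add: q_def)
  have qadj: "adj q = q" using Tpos[OF one_positive[OF assms(1)]] by (simp add: positive_elem_def q_def)
  have dq: "\<delta> q = p" using Tc[of 1] pp by (simp add: q_def)
  have qq: "q * q = q" using Td[of q] dq Tp[of 1] by (simp add: q_def)
  have pd: "p * \<delta> x = \<delta> x" for x using dmul[of 1 x] by (simp add: p_def)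
  have qx: "q * x * q = x * q" for x
  proof -
    have "\<delta> (q * x) = \<delta> x" using dmul[of q x] dq pd by simp
    hence "T (\<delta> (q * x)) = T (\<delta> x)" by simp
    thus ?thesis using Td[of "q*x"] Td[of x] by (simp add: mult.assoc)
  qed
  have qc: "q * y = y * q" for y
  proof -
    have "adj (q * adj y * q) = adj (adj y * q)" using qx[of "adj y"] by simp
    hence "q * y * q = q * y" by (simp add: adj_mult adj_adj qadj mult.assoc)
    thus ?thesis using qx[of y] by simp
  qed
  have rng: "range (\<lambda>a. c * a) = {x. c * x = x}" if "c * c = c" for c :: 'a
  proof
    show "range (\<lambda>a. c * a) \<subseteq> {x. c * x = x}" using that by (auto simp: mult.assoc[symmetric])
    show "{x. c * x = x} \<subseteq> range (\<lambda>a. c * a)" proof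
      fix x assume "x \<in> {x. c * x = x}"
      hence "x = c * x" by simp
      thus "x \<in> range (\<lambda>a. c * a)" by (rule image_eqI) simp
    qed
  qed
  have ideal: "closed_ideal smul {x. c * x = x}" if "c * c = c" "\<And>y. c * y = y * c" for c :: 'a
    unfolding closed_ideal_def
  proof (intro conjI ballI allI)
    show "closed {x. c * x = x}" by (intro closed_Collect_eq continuous_intros)
    show "0 \<in> {x. c * x = x}" by simp
  next
    fix a b assume "a \<in> {x. c * x = x}" "b \<in> {x. c * x = x}"
    thus "a + b \<in> {x. c * x = x}" by (simp add: distrib_left)
  next
    fix d a assume "a \<in> {x. c * x = x}"
    thus "smul d a \<in> {x. c * x = x}" proof -
      have "c * smul d a = smul d (c * a)" by (rule smul_mult_right[symmetric])
      thus ?thesis using \<open>a \<in> {x. c * x = x}\<close> by simp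
    qed
  next
    fix a x assume "a \<in> {x. c * x = x}"
    thus "x * a \<in> {x. c * x = x}" "a * x \<in> {x. c * x = x}"
    proof -
      have "c * (x * a) = (c * x) * a" by (simp add: mult.assoc)
      also have "\<dots> = (x * c) * a" by (simp only: that(2)[of x])
      also have "\<dots> = x * (c * a)" by (simp add: mult.assoc)
      finally have "c * (x * a) = x * (c * a)" .
      thus "x * a \<in> {x. c * x = x}" using \<open>a \<in> {x. c * x = x}\<close> by simp
      have "c * (a * x) = (c * a) * x" by (simp add: mult.assoc)
      thus "a * x \<in> {x. c * x = x}" using \<open>a \<in> {x. c * x = x}\<close> by simp
    qed
  qed
  let ?Q = "{x. q * x = x}" and ?P = "{x. p * x = x}"
  have RQ: "range (\<lambda>a. T 1 * a) = ?Q" using rng[OF qq] by (simp add: q_def)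
  have RP: "range (\<lambda>a. \<delta> 1 * a) = ?P" using rng[OF pp] by (simp add: p_def)
  have iQ: "closed_ideal smul ?Q" using ideal[OF qq qc] .
  have iP: "closed_ideal smul ?P" using ideal[OF pp pc] .
  have inv1: "T (\<delta> a) = a" if "a \<in> ?Q" for a
  proof -
    have "q * a = a" using that by simp
    thus ?thesis using Td[of a] qc[of a] by simp
  qed
  have inv2: "\<delta> (T a) = a" if "a \<in> ?P" for a
  proof -
    have h: "p * a = a" using that by simp
    have "\<delta> (T a) = p * a * p" by (rule Tc)
    also have "\<dots> = a * p" by (simp only: h)
    also have "\<dots> = p * a" by (rule pc[symmetric])
    finally show ?thesis using h by simp
  qed
  have dQ: "\<delta> a \<in> ?P" for a using pd by simp
  have TP: "T a \<in> ?Q" for a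
  proof -
    have "T a = T (p * a)" by (simp add: Tp)
    also have "\<dots> = q * T a" using Ttr[of q a] dq by simp
    finally show ?thesis by simp
  qed
  have bij1: "bij_betw \<delta> ?Q ?P"
    by (rule bij_betw_byWitness[where f'=T]) (use inv1 inv2 dQ TP in auto)
  have bij2: "bij_betw T ?P ?Q"
    by (rule bij_betw_byWitness[where f'=\<delta>]) (use inv1 inv2 dQ TP in auto)
  have Tmul: "T (a * b) = T a * T b" if "a \<in> ?P" for a b
  proof -
    have "T (a * b) = T (\<delta> (T a) * b)" using inv2[OF that] by simp
    thus ?thesis using Ttr by simp
  qed
  have Tadj: "T (adj a) = adj (T a)" if "a \<in> ?P" for a
  proof -
    have "T (adj a) = T (adj (\<delta> (T a)))" using inv2[OF that] by simp
    also have "\<dots> = adj (T a) * q" using Td by (simp add: dadj[symmetric])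
    also have "\<dots> = adj (T a)"
    proof -
      have "q * T a = T a" using TP by simp
      hence "adj (q * T a) = adj (T a)" by simp
      thus ?thesis by (simp add: adj_mult qadj)
    qed
    finally show ?thesis .
  qed
  have iso1: "star_iso_on smul adj \<delta> ?Q ?P"
    unfolding star_iso_on_def
    by (intro conjI ballI allI bij1 dadd dmul dsmul dadj)
  have iso2: "star_iso_on smul adj T ?P ?Q"
    unfolding star_iso_on_def
    by (intro conjI ballI allI bij2 Tadd Tsmul; (rule Tmul Tadj)?; assumption)
  have TmulAll: "T (a * b) = T a * T b" for a b
  proof -
    have "p * a * (p * b) = p * (a * p) * b" by (simp only: mult.assoc)
    also have "\<dots> = p * (p * a) * b" by (simp only: pc[of a])
    also have "\<dots> = p * (a * b)" by (simp only: mult.assoc[symmetric] pp)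
    finally have "p * a * (p * b) = p * (a * b)" .
    hence "T (a * b) = T (p * a * (p * b))" by (simp add: Tp)
    also have "\<dots> = T (p * a) * T (p * b)" by (rule Tmul) (simp add: mult.assoc[symmetric] pp)
    finally show ?thesis by (simp add: Tp)
  qed
  have TadjAll: "T (adj a) = adj (T a)" for a
  proof -
    have "adj (p * a) = adj a * p" by (simp only: adj_mult padj)
    also have "\<dots> = p * adj a" by (rule pc[symmetric])
    finally have "adj (p * a) = p * adj a" .
    hence "T (adj a) = T (adj (p * a))" by (simp add: Tp)
    also have "\<dots> = adj (T (p * a))" by (rule Tadj) (simp add: mult.assoc[symmetric] pp)
    finally show ?thesis by (simp add: Tp)
  qed
  have endo: "star_endo smul adj T"
    unfolding star_endo_def clinear_map_def
    by (intro conjI allI Tadd Tsmul TmulAll TadjAll)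
  show ?thesis unfolding RQ RP partial_automorphism_def
  proof (intro conjI ballI)
    show "closed_ideal smul ?Q" by (rule iQ)
    show "closed_ideal smul ?P" by (rule iP)
    show "star_iso_on smul adj \<delta> ?Q ?P" by (rule iso1)
    show "star_iso_on smul adj T ?P ?Q" by (rule iso2)
    show "star_endo smul adj T" by (rule endo)
    show "closed_ideal smul ?Q" by (rule iQ)
    show "closed_ideal smul ?P" by (rule iP)
  next
    fix a assume "a \<in> ?Q" thus "T (\<delta> a) = a" by (rule inv1)
  next
    fix a assume "a \<in> ?P" thus "\<delta> (T a) = a" by (rule inv2)
  qed
qed

end
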